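(* Let $G$ be a closed, geodesically convex subset of an Alexandrov space $(X,d)$ with $(G,d)$ separable, let $K>0$, let $(\Pi,\mathcal A,\mu)$ be a complete probability space, and let $L:\Pi\to F_K(G)$ be a random lower semi-continuous $K$-convex function. Define $f(x):=\int_\Pi L(a,x)\,d\mu(a)$ for $x\in G$. If there exists an integrable function $\alpha_0:\Pi\to(-\infty,+\infty)$ such that $L(a,x)\ge\alpha_0(a)$ holds almost surely, then $f:G\to(-\infty,+\infty]$ is lower semi-continuous and $K$-convex, and $f(x)>-\infty$ for all $x\in G$.
   Context: $F_K(G)$ denotes the set of lower semi-continuous $K$-convex functions $h:G\to(-\infty,\infty]$ not identically $+\infty$, where $h$ is $K$-convex if $h(x\#_ty)\le(1-t)h(x)+th(y)-\frac K2t(1-t)d(x,y)^2$ for all $x,y\in G$, $t\in[0,1]$ and all minimal geodesics $x\#_ty$ (curves with $d(x\#_sy,x\#_ty)=|s-t|d(x,y)$). A map $L:\Pi\to F_K(G)$, $a\mapsto L(a,\cdot)$, is a random lower semi-continuous $K$-convex function if $(a,x)\mapsto L(a,x)$ is $\mathcal A\otimes\mathcal B(G)$-measurable, $\mathcal B(G)$ being the Borel $\sigma$-algebra of $(G,d)$. *)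

theory Defs
  imports "HOL-Analysis.Analysis" "HOL-Probability.Probability"
begin

definition min_geodesic :: "(real \<Rightarrow> 'a::metric_space) \<Rightarrow> 'a \<Rightarrow> 'a \<Rightarrow> bool" where
  "min_geodesic \<gamma> x y \<longleftrightarrow> \<gamma> 0 = x \<and> \<gamma> 1 = y \<and>
     (\<forall>s\<in>{0..1}. \<forall>t\<in>{0..1}. dist (\<gamma> s) (\<gamma> t) = \<bar>s - t\<bar> * dist x y)"

definition geodesic_space :: "'a::metric_space itself \<Rightarrow> bool" where
  "geodesic_space _ \<longleftrightarrow> (\<forall>x y::'a. \<exists>\<gamma>. min_geodesic \<gamma> x y)"

text \<open>Distance in the model plane of constant curvature kappa from the vertex p~ of a
  comparison triangle with side lengths a = |p x|, b = |p y|, c = |x y| to the point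
  dividing the side x~y~ in ratio t : (1-t).\<close>
definition model_dist :: "real \<Rightarrow> real \<Rightarrow> real \<Rightarrow> real \<Rightarrow> real \<Rightarrow> real" where
  "model_dist \<kappa> a b c t =
    (if c = 0 then a
     else if \<kappa> = 0 then sqrt ((1 - t) * a\<^sup>2 + t * b\<^sup>2 - t * (1 - t) * c\<^sup>2)
     else if \<kappa> > 0 then
       (let s = sqrt \<kappa> in
        arccos ((sin ((1 - t) * s * c) * cos (s * a) + sin (t * s * c) * cos (s * b)) / sin (s * c)) / s)
     else
       (let s = sqrt (- \<kappa>) in
        arcosh ((sinh ((1 - t) * s * c) * cosh (s * a) + sinh (t * s * c) * cosh (s * b)) / sinh (s * c)) / s))"

definition admissible_triangle :: "real \<Rightarrow> 'a::metric_space \<Rightarrow> 'a \<Rightarrow> 'a \<Rightarrow> bool" where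
  "admissible_triangle \<kappa> p x y \<longleftrightarrow>
     (\<kappa> \<le> 0 \<or> dist p x + dist p y + dist x y < 2 * pi / sqrt \<kappa>)"

definition curv_ge :: "real \<Rightarrow> 'a::metric_space itself \<Rightarrow> bool" where
  "curv_ge \<kappa> _ \<longleftrightarrow> (\<forall>(p::'a) x y \<gamma> t. admissible_triangle \<kappa> p x y \<longrightarrow> min_geodesic \<gamma> x y
      \<longrightarrow> t \<in> {0..1} \<longrightarrow> dist p (\<gamma> t) \<ge> model_dist \<kappa> (dist p x) (dist p y) (dist x y) t)"

definition curv_le :: "real \<Rightarrow> 'a::metric_space itself \<Rightarrow> bool" where
  "curv_le \<kappa> _ \<longleftrightarrow> (\<forall>(p::'a) x y \<gamma> t. admissible_triangle \<kappa> p x y \<longrightarrow> min_geodesic \<gamma> x y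
      \<longrightarrow> t \<in> {0..1} \<longrightarrow> dist p (\<gamma> t) \<le> model_dist \<kappa> (dist p x) (dist p y) (dist x y) t)"

definition alexandrov_space :: "'a::metric_space itself \<Rightarrow> bool" where
  "alexandrov_space T \<longleftrightarrow> Topological_Spaces.complete (UNIV :: 'a set) \<and> geodesic_space T \<and>
     (\<exists>\<kappa>. curv_ge \<kappa> T \<or> curv_le \<kappa> T)"

definition geodesically_convex :: "'a::metric_space set \<Rightarrow> bool" where
  "geodesically_convex G \<longleftrightarrow>
     (\<forall>x\<in>G. \<forall>y\<in>G. \<forall>\<gamma>. min_geodesic \<gamma> x y \<longrightarrow> (\<forall>t\<in>{0..1}. \<gamma> t \<in> G))"

definition separable_set :: "'a::metric_space set \<Rightarrow> bool" where
  "separable_set G \<longleftrightarrow> (\<exists>D. countable D \<and> D \<subseteq> G \<and> G \<subseteq> closure D)"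

definition lsc_on :: "'a::metric_space set \<Rightarrow> ('a \<Rightarrow> ereal) \<Rightarrow> bool" where
  "lsc_on G h \<longleftrightarrow> (\<forall>x\<in>G. \<forall>c. c < h x \<longrightarrow>
      (\<exists>e>0. \<forall>y\<in>G. dist y x < e \<longrightarrow> c < h y))"

definition K_convex_on :: "real \<Rightarrow> 'a::metric_space set \<Rightarrow> ('a \<Rightarrow> ereal) \<Rightarrow> bool" where
  "K_convex_on K G h \<longleftrightarrow> (\<forall>x\<in>G. \<forall>y\<in>G. \<forall>\<gamma>. min_geodesic \<gamma> x y \<longrightarrow> (\<forall>t\<in>{0..1}.
      h (\<gamma> t) \<le> ereal (1 - t) * h x + ereal t * h y - ereal (K / 2 * t * (1 - t) * (dist x y)\<^sup>2)))"

definition F_K :: "real \<Rightarrow> 'a::metric_space set \<Rightarrow> ('a \<Rightarrow> ereal) set" where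
  "F_K K G = {h. lsc_on G h \<and> K_convex_on K G h \<and> (\<forall>x\<in>G. h x \<noteq> -\<infinity>) \<and> (\<exists>x\<in>G. h x \<noteq> \<infinity>)}"

definition random_lsc_K_convex ::
    "'b measure \<Rightarrow> real \<Rightarrow> 'a::metric_space set \<Rightarrow> ('b \<Rightarrow> 'a \<Rightarrow> ereal) \<Rightarrow> bool" where
  "random_lsc_K_convex M K G L \<longleftrightarrow> (\<forall>a\<in>space M. L a \<in> F_K K G) \<and>
     (\<lambda>p. L (fst p) (snd p)) \<in> borel_measurable (M \<Otimes>\<^sub>M restrict_space borel G)"

definition ereal_integral :: "'b measure \<Rightarrow> ('b \<Rightarrow> ereal) \<Rightarrow> ereal" where
  "ereal_integral M g = enn2ereal (\<integral>\<^sup>+ a. e2ennreal (g a) \<partial>M) - enn2ereal (\<integral>\<^sup>+ a. e2ennreal (- g a) \<partial>M)"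

end

theory Submission
  imports Defs
begin

lemma enn2ereal_ennreal':
  "enn2ereal (ennreal x) = ereal (max 0 x)"
  by (cases "x \<ge> 0") (auto simp: ennreal_neg zero_ennreal.rep_eq)

lemma ptwise_id:
  fixes r h :: real
  assumes "h \<le> r"
  shows "ennreal r + ennreal (-h) = ennreal (r - h) + ennreal (-r) + ennreal h"
proof -
  have "enn2ereal (ennreal r + ennreal (-h)) = enn2ereal (ennreal (r - h) + ennreal (-r) + ennreal h)"
    unfolding plus_ennreal.rep_eq enn2ereal_ennreal'
    using assms by (auto simp: max_def)
  then show ?thesis by (metis e2ennreal_enn2ereal)
qed

lemma ptwise_id2:
  fixes g :: ereal and h :: real
  assumes "ereal h \<le> g" "g \<noteq> -\<infinity>"
  shows "e2ennreal g + ennreal (-h) = e2ennreal (g - ereal h) + e2ennreal (-g) + ennreal h"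
proof (cases g)
  case (real r) then show ?thesis using assms ptwise_id[of h r] by simp
next
  case PInf then show ?thesis by simp
next
  case MInf then show ?thesis using assms by simp
qed

lemma ereal_integral_shift:
  assumes g[measurable]: "g \<in> borel_measurable M" and h: "integrable M h"
    and ninf: "\<forall>a\<in>space M. g a \<noteq> -\<infinity>" and ae: "AE a in M. ereal (h a) \<le> g a"
  shows "ereal_integral M g = enn2ereal (\<integral>\<^sup>+a. e2ennreal (g a - ereal (h a)) \<partial>M) + ereal (integral\<^sup>L M h)"
proof -
  have hm[measurable]: "h \<in> borel_measurable M" using h by auto
  define Gp where "Gp = (\<integral>\<^sup>+a. e2ennreal (g a) \<partial>M)"
  define Gm where "Gm = (\<integral>\<^sup>+a. e2ennreal (- g a) \<partial>M)"
  define Hp where "Hp = (\<integral>\<^sup>+a. ennreal (h a) \<partial>M)"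
  define Hm where "Hm = (\<integral>\<^sup>+a. ennreal (- h a) \<partial>M)"
  define D where "D = (\<integral>\<^sup>+a. e2ennreal (g a - ereal (h a)) \<partial>M)"
  have "Gp + Hm = (\<integral>\<^sup>+a. e2ennreal (g a) + ennreal (- h a) \<partial>M)"
    unfolding Gp_def Hm_def by (rule nn_integral_add[symmetric]) auto
  also have "\<dots> = (\<integral>\<^sup>+a. e2ennreal (g a - ereal (h a)) + e2ennreal (- g a) + ennreal (h a) \<partial>M)"
    apply (rule nn_integral_cong_AE)
    using AE_space ae proof eventually_elim
    case (elim a) then show ?case using ninf ptwise_id2 by blast
  qed
  also have "\<dots> = D + Gm + Hp"
    unfolding D_def Gm_def Hp_def
    by (simp add: nn_integral_add)
  finally have eq: "Gp + Hm = D + Gm + Hp" .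
  have nf: "(\<integral>\<^sup>+x. ennreal (norm (h x)) \<partial>M) < top"
    using h unfolding integrable_iff_bounded by (metis infinity_ennreal_def)
  have Hpf: "Hp < top" unfolding Hp_def
    by (rule le_less_trans[OF _ nf]) (auto intro!: nn_integral_mono ennreal_leI)
  have Hmf: "Hm < top" unfolding Hm_def
    by (rule le_less_trans[OF _ nf]) (auto intro!: nn_integral_mono ennreal_leI)
  have "Gm \<le> Hm" unfolding Gm_def Hm_def
    apply (rule nn_integral_mono_AE)
    using ae proof eventually_elim
    case (elim a)
    then have "- g a \<le> ereal (- h a)" by (metis ereal_minus_le_minus uminus_ereal.simps(1))
    then show ?case by (metis e2ennreal_ereal e2ennreal_mono)
  qed
  with Hmf have Gmf: "Gm < top" by auto
  have I: "integral\<^sup>L M h = enn2real Hp - enn2real Hm"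
    unfolding Hp_def Hm_def by (rule real_lebesgue_integral_def[OF h])
  have fin: "enn2ereal X = ereal (enn2real X)" if "X < top" for X
    using that by (metis enn2ereal_ennreal enn2real_nonneg ennreal_enn2real)
  have eq2: "enn2ereal Gp + ereal (enn2real Hm) = enn2ereal D + ereal (enn2real Gm) + ereal (enn2real Hp)"
    using arg_cong[OF eq, of enn2ereal] unfolding plus_ennreal.rep_eq
    using fin[OF Hpf] fin[OF Hmf] fin[OF Gmf] by simp
  have "ereal_integral M g = enn2ereal Gp - ereal (enn2real Gm)"
    unfolding ereal_integral_def Gp_def Gm_def using fin[OF Gmf[unfolded Gm_def]] by simp
  also have "\<dots> = enn2ereal D + ereal (enn2real Hp - enn2real Hm)"
  proof (cases "enn2ereal D = \<infinity>")
    case True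
    then have "enn2ereal Gp = \<infinity>" using eq2 by auto
    then show ?thesis using True by simp
  next
    case False
    then obtain b where b: "enn2ereal D = ereal b"
      using enn2ereal_nonneg[of D] by (cases "enn2ereal D") auto
    then have "enn2ereal Gp \<noteq> \<infinity>" using eq2 by auto
    then obtain a where a: "enn2ereal Gp = ereal a"
      using enn2ereal_nonneg[of Gp] by (cases "enn2ereal Gp") auto
    show ?thesis using eq2 a b by simp
  qed
  finally show ?thesis unfolding D_def I .
qed

lemma less_e2ennreal_iff: "0 \<le> w \<Longrightarrow> z < e2ennreal w \<longleftrightarrow> enn2ereal z < w"
  by (simp add: less_ennreal.rep_eq enn2ereal_e2ennreal)

lemma ereal_mult_ne_minf: "0 \<le> t \<Longrightarrow> q \<noteq> -\<infinity> \<Longrightarrow> ereal t * q \<noteq> -\<infinity>"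
  by (cases q; cases "t = 0") auto

lemma le_inf_sum1: "(a::ereal) = \<infinity> \<Longrightarrow> b \<noteq> -\<infinity> \<Longrightarrow> x \<le> a + b"
  by (cases b) auto
lemma le_inf_sum2: "(a::ereal) = \<infinity> \<Longrightarrow> b \<noteq> -\<infinity> \<Longrightarrow> x \<le> a + b - ereal c"
  by (cases b) auto
lemma le_inf_sum3: "(b::ereal) = \<infinity> \<Longrightarrow> a \<noteq> -\<infinity> \<Longrightarrow> x \<le> a + b - ereal c"
  by (cases a) auto

lemma conv_pt:
  fixes u v w :: ereal and \<alpha> t c :: real
  assumes t: "0 \<le> t" "t \<le> 1" and c: "0 \<le> c"
    and le: "ereal \<alpha> \<le> u" "ereal \<alpha> \<le> v" "ereal \<alpha> \<le> w"
    and cv: "w \<le> ereal (1 - t) * u + ereal t * v - ereal c"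
  shows "e2ennreal (w - ereal \<alpha>) + ennreal c \<le> ennreal (1 - t) * e2ennreal (u - ereal \<alpha>) + ennreal t * e2ennreal (v - ereal \<alpha>)"
proof -
  have nn: "0 \<le> u - ereal \<alpha>" "0 \<le> v - ereal \<alpha>" "0 \<le> w - ereal \<alpha>"
    using le by (auto simp: ereal_le_minus_iff ereal_minus_le_iff) 
  have "(w - ereal \<alpha>) + ereal c \<le> ereal (1 - t) * (u - ereal \<alpha>) + ereal t * (v - ereal \<alpha>)"
  proof (cases u)
    case (real ur) note u = this
    show ?thesis
    proof (cases v)
      case (real vr)
      then obtain wr where w: "w = ereal wr" using le cv u by (cases w) auto
      show ?thesis using cv u real w by (simp add: algebra_simps)
    next
      case PInf
      show ?thesis
      proof (cases "t = 0")
        case True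
        then obtain wr where w: "w = ereal wr" using le cv u PInf by (cases w) auto
        show ?thesis using cv u PInf w True by simp
      qed (use PInf t in simp)
    qed (use le in auto)
  next
    case PInf note u = this
    show ?thesis
    proof (cases "t = 1")
      case True
      show ?thesis
      proof (cases v)
        case (real vr)
        then obtain wr where w: "w = ereal wr" using le cv u True by (cases w) auto
        show ?thesis using cv u real w True by simp
      qed (use le True in auto)
    next
      case False
      then have "ereal (1 - t) * (u - ereal \<alpha>) = \<infinity>" using u t by simp
      moreover have "ereal t * (v - ereal \<alpha>) \<noteq> -\<infinity>" using nn t
        by (intro ereal_mult_ne_minf) auto
      ultimately show ?thesis by (rule le_inf_sum1)
    qed
  qed (use le in auto)
  then have "enn2ereal (e2ennreal (w - ereal \<alpha>) + ennreal c) \<le> enn2ereal (ennreal (1 - t) * e2ennreal (u - ereal \<alpha>) + ennreal t * e2ennreal (v - ereal \<alpha>))"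
    unfolding plus_ennreal.rep_eq times_ennreal.rep_eq using nn t c by (simp add: enn2ereal_e2ennreal)
  then show ?thesis by (simp add: less_eq_ennreal.rep_eq)
qed

lemma conv_final:
  fixes X Y Z C :: ereal and t c :: real
  assumes "0 \<le> X" "0 \<le> Y" "0 \<le> Z" and t: "0 \<le> t" "t \<le> 1" and c: "0 \<le> c"
    and h: "Z + ereal c \<le> ereal (1 - t) * X + ereal t * Y" and C: "\<bar>C\<bar> \<noteq> \<infinity>"
  shows "Z + C \<le> ereal (1 - t) * (X + C) + ereal t * (Y + C) - ereal c"
proof -
  obtain cc where cc: "C = ereal cc" using C by (cases C) auto
  show ?thesis
  proof (cases "Z = \<infinity>")
    case False
    then obtain z where z: "Z = ereal z" using assms by (cases Z) auto
    show ?thesis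
    proof (cases X)
      case (real x) note X = this
      show ?thesis
      proof (cases Y)
        case (real y) then show ?thesis using X z cc h by (simp add: algebra_simps)
      next
        case PInf
        show ?thesis
        proof (cases "t = 0")
          case True then show ?thesis using X z cc h PInf by (simp add: algebra_simps)
        qed (use PInf t X cc in simp)
      qed (use assms in auto)
    next
      case PInf note X = this
      show ?thesis
      proof (cases "t = 1")
        case True
        then show ?thesis using X z cc h assms by (cases Y) (auto simp: algebra_simps)
      next
        case False
        then have "ereal (1 - t) * (X + C) = \<infinity>" using X t cc by simp
        moreover have "ereal t * (Y + C) \<noteq> -\<infinity>" using assms cc t by (cases Y) auto
        ultimately show ?thesis by (rule le_inf_sum2)
      qed
    qed (use assms in auto)
  next
    case True
    then have "ereal (1 - t) * X + ereal t * Y = \<infinity>" using h by simp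
    then have "ereal (1 - t) * X = \<infinity> \<or> ereal t * Y = \<infinity>"
      by (cases "ereal (1 - t) * X"; cases "ereal t * Y") auto
    moreover have "ereal t * (Y + C) \<noteq> -\<infinity>" "ereal (1 - t) * (X + C) \<noteq> -\<infinity>"
      using assms cc by (auto intro!: ereal_mult_ne_minf)
    moreover have "ereal (1 - t) * (X + C) = \<infinity>" if "ereal (1 - t) * X = \<infinity>"
      using that cc t by (cases X; cases "t = 1") auto
    moreover have "ereal t * (Y + C) = \<infinity>" if "ereal t * Y = \<infinity>"
      using that cc t by (cases Y; cases "t = 0") auto
    ultimately show ?thesis using True by (metis le_inf_sum2 le_inf_sum3)
  qed
qed

theorem lemma6p2:
  fixes G :: "'a::metric_space set" and K :: real and M :: "'b measure"
    and L :: "'b \<Rightarrow> 'a \<Rightarrow> ereal" and \<alpha>0 :: "'b \<Rightarrow> real"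
  assumes "alexandrov_space TYPE('a)"
    and "closed G" and "geodesically_convex G" and "separable_set G"
    and "K > 0"
    and "prob_space M" and "complete_measure M"
    and "random_lsc_K_convex M K G L"
    and "integrable M \<alpha>0"
    and "\<forall>x\<in>G. AE a in M. L a x \<ge> ereal (\<alpha>0 a)"
  shows "lsc_on G (\<lambda>x. ereal_integral M (\<lambda>a. L a x))
    \<and> K_convex_on K G (\<lambda>x. ereal_integral M (\<lambda>a. L a x))
    \<and> (\<forall>x\<in>G. ereal_integral M (\<lambda>a. L a x) > -\<infinity>)"
proof -
  note gc = assms(3) and Kp = assms(5) and ps = assms(6) and int = assms(9) and aeb = assms(10)
  have FK: "\<And>a. a \<in> space M \<Longrightarrow> L a \<in> F_K K G"
    and meas: "(\<lambda>p. L (fst p) (snd p)) \<in> borel_measurable (M \<Otimes>\<^sub>M restrict_space borel G)"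
    using assms(8) unfolding random_lsc_K_convex_def by auto
  have am[measurable]: "\<alpha>0 \<in> borel_measurable M" using int by auto
  have Lm[measurable]: "(\<lambda>a. L a x) \<in> borel_measurable M" if "x \<in> G" for x
  proof -
    have "(\<lambda>a. (a, x)) \<in> M \<rightarrow>\<^sub>M M \<Otimes>\<^sub>M restrict_space borel G"
      by (rule measurable_Pair2') (use that in \<open>simp add: space_restrict_space\<close>)
    from measurable_comp[OF this meas] show ?thesis by (simp add: comp_def)
  qed
  have ninf: "L a x \<noteq> -\<infinity>" if "a \<in> space M" "x \<in> G" for a x
    using FK[OF that(1)] that(2) unfolding F_K_def by auto
  define D where "D x = (\<integral>\<^sup>+a. e2ennreal (L a x - ereal (\<alpha>0 a)) \<partial>M)" for x
  define C where "C = integral\<^sup>L M \<alpha>0"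
  have Feq: "ereal_integral M (\<lambda>a. L a x) = enn2ereal (D x) + ereal C" if x: "x \<in> G" for x
    unfolding D_def C_def
    by (rule ereal_integral_shift[OF Lm[OF x] int]) (use ninf x aeb in auto)
  have Dm[measurable]: "(\<lambda>a. e2ennreal (L a x - ereal (\<alpha>0 a))) \<in> borel_measurable M" if "x \<in> G" for x
    using Lm[OF that] by measurable
  have part3: "\<forall>x\<in>G. ereal_integral M (\<lambda>a. L a x) > -\<infinity>"
    using Feq by simp
  have part2: "K_convex_on K G (\<lambda>x. ereal_integral M (\<lambda>a. L a x))"
    unfolding K_convex_on_def
  proof (intro ballI allI impI)
    fix x y :: 'a and \<gamma> :: "real \<Rightarrow> 'a" and t :: real assume x: "x \<in> G" and y: "y \<in> G" and g: "min_geodesic \<gamma> x y" and t: "t \<in> {0..1}"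
    define z where "z = \<gamma> t"
    have z: "z \<in> G" using gc x y g t unfolding geodesically_convex_def z_def by blast
    define c where "c = K / 2 * t * (1 - t) * (dist x y)\<^sup>2"
    have c: "0 \<le> c" unfolding c_def using Kp t by auto
    have pt: "AE a in M. e2ennreal (L a z - ereal (\<alpha>0 a)) + ennreal c \<le>
        ennreal (1 - t) * e2ennreal (L a x - ereal (\<alpha>0 a)) + ennreal t * e2ennreal (L a y - ereal (\<alpha>0 a))"
      using AE_space aeb[rule_format, OF x] aeb[rule_format, OF y] aeb[rule_format, OF z]
    proof eventually_elim
      case (elim a)
      have "L a z \<le> ereal (1 - t) * L a x + ereal t * L a y - ereal c"
        using FK[OF elim(1)] x y g t unfolding F_K_def K_convex_on_def z_def c_def by blast
      then show ?case using elim t c by (intro conv_pt) auto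
    qed
    have "D z + ennreal c = (\<integral>\<^sup>+a. e2ennreal (L a z - ereal (\<alpha>0 a)) + ennreal c \<partial>M)"
      unfolding D_def using z
      by (simp add: nn_integral_add prob_space.emeasure_space_1[OF ps])
    also have "\<dots> \<le> (\<integral>\<^sup>+a. ennreal (1 - t) * e2ennreal (L a x - ereal (\<alpha>0 a)) + ennreal t * e2ennreal (L a y - ereal (\<alpha>0 a)) \<partial>M)"
      by (rule nn_integral_mono_AE[OF pt])
    also have "\<dots> = ennreal (1 - t) * D x + ennreal t * D y"
      unfolding D_def using x y by (simp add: nn_integral_add nn_integral_cmult)
    finally have le: "D z + ennreal c \<le> ennreal (1 - t) * D x + ennreal t * D y" .
    have le': "enn2ereal (D z) + ereal c \<le> ereal (1 - t) * enn2ereal (D x) + ereal t * enn2ereal (D y)"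
      using le t c unfolding less_eq_ennreal.rep_eq plus_ennreal.rep_eq times_ennreal.rep_eq by simp
    have "enn2ereal (D z) + ereal C \<le> ereal (1 - t) * (enn2ereal (D x) + ereal C) + ereal t * (enn2ereal (D y) + ereal C) - ereal c"
      by (rule conv_final[OF _ _ _ _ _ c le']) (use t in auto)
    then show "ereal_integral M (\<lambda>a. L a (\<gamma> t)) \<le> ereal (1 - t) * ereal_integral M (\<lambda>a. L a x) + ereal t * ereal_integral M (\<lambda>a. L a y) - ereal (K / 2 * t * (1 - t) * (dist x y)\<^sup>2)"
      using Feq x y z unfolding z_def c_def by simp
  qed
  have part1: "lsc_on G (\<lambda>x. ereal_integral M (\<lambda>a. L a x))"
    unfolding lsc_on_def
  proof (intro ballI allI impI)
    fix x c assume x: "x \<in> G" and cx: "c < ereal_integral M (\<lambda>a. L a x)"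
    show "\<exists>e>0. \<forall>y\<in>G. dist y x < e \<longrightarrow> c < ereal_integral M (\<lambda>a. L a y)"
    proof (rule ccontr)
      assume neg: "\<not> (\<exists>e>0. \<forall>y\<in>G. dist y x < e \<longrightarrow> c < ereal_integral M (\<lambda>a. L a y))"
      have "\<exists>y. y \<in> G \<and> dist y x < inverse (real (Suc n)) \<and> \<not> c < ereal_integral M (\<lambda>a. L a y)" for n
      proof -
        have "inverse (real (Suc n)) > 0" by simp
        then show ?thesis using neg by blast
      qed
      then obtain ys where ys: "\<And>n. ys n \<in> G" "\<And>n. dist (ys n) x < inverse (real (Suc n))"
        "\<And>n. \<not> c < ereal_integral M (\<lambda>a. L a (ys n))"
        by metis
      have Fle: "enn2ereal (D (ys n)) + ereal C \<le> c" for n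
        using ys(3)[of n] Feq[OF ys(1)[of n]] by (simp add: not_less)
      have "c \<noteq> -\<infinity>" using Fle[of 0] by auto
      moreover have "c \<noteq> \<infinity>" using cx by auto
      ultimately obtain c0 where c0: "c = ereal c0" by (cases c) auto
      have B: "enn2ereal (D (ys n)) \<le> ereal (c0 - C)" for n
        using Fle[of n] c0 by (cases "enn2ereal (D (ys n))") auto
      have "0 \<le> ereal (c0 - C)" by (rule order_trans[OF enn2ereal_nonneg B[of 0]])
      then have c0C: "0 \<le> c0 - C" by simp
      have B': "D (ys n) \<le> ennreal (c0 - C)" for n
        using B[of n] c0C by (simp add: less_eq_ennreal.rep_eq)
      have lim: "liminf (\<lambda>n. D (ys n)) \<le> ennreal (c0 - C)"
        by (rule Liminf_le) (auto simp: B')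
      have ptw: "e2ennreal (L a x - ereal (\<alpha>0 a)) \<le> liminf (\<lambda>n. e2ennreal (L a (ys n) - ereal (\<alpha>0 a)))"
        if a: "a \<in> space M" for a
        unfolding le_Liminf_iff
      proof (intro allI impI)
        fix z assume z: "z < e2ennreal (L a x - ereal (\<alpha>0 a))"
        have w0: "0 \<le> L a x - ereal (\<alpha>0 a)"
        proof (rule ccontr)
          assume "\<not> 0 \<le> L a x - ereal (\<alpha>0 a)"
          then have "e2ennreal (L a x - ereal (\<alpha>0 a)) = 0" by (intro e2ennreal_neg) auto
          then show False using z by simp
        qed
        have "enn2ereal z < L a x - ereal (\<alpha>0 a)" using z less_e2ennreal_iff[OF w0] by blast
        then have cz: "enn2ereal z + ereal (\<alpha>0 a) < L a x"
          by (cases "L a x"; cases "enn2ereal z") auto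
        obtain e where e: "e > 0" "\<forall>y\<in>G. dist y x < e \<longrightarrow> enn2ereal z + ereal (\<alpha>0 a) < L a y"
          using FK[OF a] x cz unfolding F_K_def lsc_on_def by blast
        have ev: "\<forall>\<^sub>F n in sequentially. inverse (real (Suc n)) < e"
          using e(1) Archimedean_eventually_inverse by blast
        show "\<forall>\<^sub>F n in sequentially. z < e2ennreal (L a (ys n) - ereal (\<alpha>0 a))"
          using ev
        proof eventually_elim
          case (elim n)
          then have "dist (ys n) x < e" using ys(2)[of n] by linarith
          then have lt: "enn2ereal z + ereal (\<alpha>0 a) < L a (ys n)" using e ys(1) by blast
          then have l2: "enn2ereal z < L a (ys n) - ereal (\<alpha>0 a)"
            by (cases "L a (ys n)"; cases "enn2ereal z") auto
          moreover have "0 \<le> L a (ys n) - ereal (\<alpha>0 a)"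
            using l2 enn2ereal_nonneg[of z] by (meson less_imp_le order_trans)
          ultimately show ?case using less_e2ennreal_iff by blast
        qed
      qed
      have "D x \<le> (\<integral>\<^sup>+a. liminf (\<lambda>n. e2ennreal (L a (ys n) - ereal (\<alpha>0 a))) \<partial>M)"
        unfolding D_def by (rule nn_integral_mono) (rule ptw)
      also have "\<dots> \<le> liminf (\<lambda>n. D (ys n))"
        unfolding D_def by (rule nn_integral_liminf) (use ys(1) Dm in auto)
      also have "\<dots> \<le> ennreal (c0 - C)" by (rule lim)
      finally have "enn2ereal (D x) \<le> ereal (c0 - C)" using c0C by (simp add: less_eq_ennreal.rep_eq)
      then have "ereal_integral M (\<lambda>a. L a x) \<le> c" using Feq[OF x] c0
        by (cases "enn2ereal (D x)") auto
      then show False using cx by simp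
    qed
  qed
  show ?thesis using part1 part2 part3 by blast
qed

end
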